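(* Let $f(n)$ be the number of permutations $\pi\in\mathfrak S_n$ all of whose valleys are even and all of whose peaks are odd (with $f(0)=1$), and let $F(x)=\sum_{n\ge0} f(n)\,x^n/n!$. Then \[ F(x)=\frac{3\sin\left(\tfrac{1}{2}x\right)+3\cosh\left(\tfrac{1}{2}\sqrt{3}x\right)}{3\cos\left(\tfrac{1}{2}x\right)-\sqrt{3}\sinh\left(\tfrac{1}{2}\sqrt{3}x\right)}. \]
   Context: $\mathfrak S_n$ is the set of permutations $\pi=\pi_1\pi_2\cdots\pi_n$ of $[n]=\{1,\dots,n\}$. An index $i$ with $2\le i\le n-1$ is a peak of $\pi$ if $\pi_{i-1}<\pi_i>\pi_{i+1}$ and a valley of $\pi$ if $\pi_{i-1}>\pi_i<\pi_{i+1}$. "All valleys even and all peaks odd" means every valley index is an even integer and every peak index is an odd integer. *)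

theory Defs
  imports "HOL-Combinatorics.Multiset_Permutations" "HOL-Computational_Algebra.Formal_Power_Series"
begin

text \<open>Permutations of [n] are represented as lists p in permutations_of_set {1..n};
  the paper's entry pi_i (1-based) is p ! (i - 1).\<close>

definition is_peak :: "nat list \<Rightarrow> nat \<Rightarrow> bool" where
  "is_peak p i \<longleftrightarrow> 2 \<le> i \<and> i \<le> length p - 1 \<and>
     p ! (i - 2) < p ! (i - 1) \<and> p ! (i - 1) > p ! i"

definition is_valley :: "nat list \<Rightarrow> nat \<Rightarrow> bool" where
  "is_valley p i \<longleftrightarrow> 2 \<le> i \<and> i \<le> length p - 1 \<and>
     p ! (i - 2) > p ! (i - 1) \<and> p ! (i - 1) < p ! i"

definition f_count :: "nat \<Rightarrow> nat" where
  "f_count n = card {p \<in> permutations_of_set {1..n}.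
      (\<forall>i. is_valley p i \<longrightarrow> even i) \<and> (\<forall>i. is_peak p i \<longrightarrow> odd i)}"

definition fps_cosh :: "real \<Rightarrow> real fps" where
  "fps_cosh c = fps_const (1/2) * (fps_exp c + fps_exp (- c))"

definition fps_sinh :: "real \<Rightarrow> real fps" where
  "fps_sinh c = fps_const (1/2) * (fps_exp c - fps_exp (- c))"

end

theory Submission
  imports Defs "HOL-Library.Extended_Nat"
begin

definition okp :: "nat \<Rightarrow> enat \<Rightarrow> enat \<Rightarrow> enat \<Rightarrow> bool" where
  "okp j l x r \<longleftrightarrow> ((x < l \<and> x < r) \<longrightarrow> even j) \<and> ((l < x \<and> r < x) \<longrightarrow> odd j)"

fun alt :: "nat \<Rightarrow> enat list \<Rightarrow> bool" where
  "alt t (x#y#z#zs) = (okp (Suc t) x y z \<and> alt (Suc t) (y#z#zs))"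
| "alt t _ = True"

lemma alt_Cons2: "alt t (x#y#zs) = ((zs \<noteq> [] \<longrightarrow> okp (Suc t) x y (hd zs)) \<and> alt (Suc t) (y#zs))"
  by (cases zs) auto

lemma alt_append:
  "alt t (xs @ y # ys) \<longleftrightarrow> alt t (xs @ [y]) \<and> alt (t + length xs) (y # ys) \<and>
     (xs \<noteq> [] \<longrightarrow> ys \<noteq> [] \<longrightarrow> okp (t + length xs) (last xs) y (hd ys))"
proof (induction xs arbitrary: t)
  case Nil
  then show ?case by simp
next
  case (Cons a as)
  show ?case
  proof (cases as)
    case Nil
    then show ?thesis by (cases ys) (simp_all add: conj_commute)
  next
    case (Cons a' as')
    have "alt t (a # as @ y # ys) = (okp (Suc t) a a' (hd (as' @ y # ys)) \<and> alt (Suc t) (as @ y # ys))"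
      using Cons by (simp add: alt_Cons2)
    also have "hd (as' @ y # ys) = hd (as' @ [y])" by (cases as') auto
    finally show ?thesis using Cons.IH[of "Suc t"] Cons by (simp add: alt_Cons2)
  qed
qed

lemma alt_short: "length xs \<le> 2 \<Longrightarrow> alt t xs"
  by (induction t xs rule: alt.induct) auto

lemma alt_snoc_cong:
  assumes "2 \<le> length xs \<Longrightarrow> (last xs < u \<longleftrightarrow> last xs < v) \<and> (u < last xs \<longleftrightarrow> v < last xs)"
  shows "alt t (xs @ [u]) = alt t (xs @ [v])"
proof (cases "2 \<le> length xs")
  case False
  then have "length (xs @ [u]) \<le> 2" "length (xs @ [v]) \<le> 2" by auto
  then show ?thesis using alt_short by blast
next
  case True
  define xs0 where "xs0 = butlast xs"
  define w where "w = last xs"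
  have xs: "xs = xs0 @ [w]" using True unfolding xs0_def w_def
    by (metis append_butlast_last_id list.size(3) not_numeral_le_zero)
  have ne: "xs0 \<noteq> []" using True xs by auto
  have c: "(w < u \<longleftrightarrow> w < v) \<and> (u < w \<longleftrightarrow> v < w)" using assms True w_def by simp
  have ok: "okp j l w u = okp j l w v" for j l using c unfolding okp_def by auto
  have "alt t (xs @ [u]) = alt t (xs0 @ w # [u])" by (simp add: xs)
  also have "\<dots> = alt t (xs0 @ w # [v])"
    using ne ok by (subst (1 2) alt_append) (simp add: alt_short)
  finally show ?thesis by (simp add: xs)
qed

lemma alt_Cons_cong:
  assumes "2 \<le> length ys \<Longrightarrow> (hd ys < u \<longleftrightarrow> hd ys < v) \<and> (u < hd ys \<longleftrightarrow> v < hd ys)"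
  shows "alt t (u # ys) = alt t (v # ys)"
proof (cases ys)
  case Nil then show ?thesis by simp
next
  case (Cons y zs)
  show ?thesis
  proof (cases zs)
    case Nil then show ?thesis using Cons by simp
  next
    case (Cons z zs')
    have "okp j u y z = okp j v y z" for j using assms \<open>ys = y # zs\<close> Cons unfolding okp_def by auto
    then show ?thesis using \<open>ys = y # zs\<close> Cons by simp
  qed
qed


declare last_map[simp] hd_map[simp]

definition ext :: "bool \<Rightarrow> bool \<Rightarrow> nat list \<Rightarrow> enat list" where
  "ext a b p = (if a then [\<infinity>] else []) @ map enat p @ (if b then [\<infinity>] else [])"

definition good :: "bool \<Rightarrow> bool \<Rightarrow> nat \<Rightarrow> nat list \<Rightarrow> bool" where
  "good a b s p = alt (if a then s else Suc s) (ext a b p)"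

lemma good_Nil: "good a b s []"
  unfolding good_def ext_def by (rule alt_short) simp

lemma good_split:
  assumes l1: "\<forall>x\<in>set l1. x < m" and l2: "\<forall>x\<in>set l2. x < m"
  shows "good a b s (l1 @ m # l2) \<longleftrightarrow> good a True s l1 \<and> good True b (Suc (s + length l1)) l2 \<and>
     (l1 \<noteq> [] \<longrightarrow> l2 \<noteq> [] \<longrightarrow> odd (Suc (s + length l1))) \<and>
     (l1 = [] \<longrightarrow> l2 = [] \<longrightarrow> a \<longrightarrow> b \<longrightarrow> odd s)"
proof -
  define X where "X = (if a then [\<infinity>] else []) @ map enat l1"
  define Y where "Y = map enat l2 @ (if b then [\<infinity>::enat] else [])"
  define t where "t = (if a then s else Suc s)"
  have e: "ext a b (l1 @ m # l2) = X @ enat m # Y" unfolding ext_def X_def Y_def by simp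
  have tl: "t + length X = Suc (s + length l1)" unfolding t_def X_def by auto
  have A: "alt t (X @ [enat m]) = good a True s l1"
  proof -
    have "alt t (X @ [enat m]) = alt t (X @ [\<infinity>])"
    proof (rule alt_snoc_cong)
      assume "2 \<le> length X"
      then have "l1 \<noteq> []" unfolding X_def by (cases a) auto
      then have "last X = enat (last l1)" "last l1 < m" unfolding X_def using l1 by auto
      then show "(last X < enat m \<longleftrightarrow> last X < \<infinity>) \<and> (enat m < last X \<longleftrightarrow> \<infinity> < last X)"
        by auto
    qed
    also have "X @ [\<infinity>] = ext a True l1" unfolding X_def ext_def by simp
    finally show ?thesis unfolding good_def t_def by simp
  qed
  have B: "alt (t + length X) (enat m # Y) = good True b (Suc (s + length l1)) l2"
  proof -
    have "alt (t + length X) (enat m # Y) = alt (t + length X) (\<infinity> # Y)"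
    proof (rule alt_Cons_cong)
      assume "2 \<le> length Y"
      then have "l2 \<noteq> []" unfolding Y_def by (cases b) auto
      then have "hd Y = enat (hd l2)" "hd l2 < m" unfolding Y_def using l2 by auto
      then show "(hd Y < enat m \<longleftrightarrow> hd Y < \<infinity>) \<and> (enat m < hd Y \<longleftrightarrow> \<infinity> < hd Y)"
        by auto
    qed
    also have "\<infinity> # Y = ext True b l2" unfolding Y_def ext_def by simp
    finally show ?thesis unfolding good_def tl by simp
  qed
  have C: "(X \<noteq> [] \<longrightarrow> Y \<noteq> [] \<longrightarrow> okp (Suc (s + length l1)) (last X) (enat m) (hd Y)) \<longleftrightarrow>
     (l1 \<noteq> [] \<longrightarrow> l2 \<noteq> [] \<longrightarrow> odd (Suc (s + length l1))) \<and>
     (l1 = [] \<longrightarrow> l2 = [] \<longrightarrow> a \<longrightarrow> b \<longrightarrow> odd s)"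
  proof (cases "l1 = []"; cases "l2 = []")
    assume "l1 = []" "l2 = []"
    then show ?thesis unfolding X_def Y_def okp_def by auto
  next
    assume "l1 = []" "l2 \<noteq> []"
    then have "hd Y = enat (hd l2)" "hd l2 < m" unfolding Y_def using l2 by auto
    then show ?thesis using \<open>l1 = []\<close> \<open>l2 \<noteq> []\<close> unfolding X_def okp_def by auto
  next
    assume "l1 \<noteq> []" "l2 = []"
    then have "last X = enat (last l1)" "last l1 < m" unfolding X_def using l1 by auto
    then show ?thesis using \<open>l1 \<noteq> []\<close> \<open>l2 = []\<close> unfolding Y_def okp_def by auto
  next
    assume "l1 \<noteq> []" "l2 \<noteq> []"
    then have "hd Y = enat (hd l2)" "hd l2 < m" "last X = enat (last l1)" "last l1 < m"
      unfolding X_def Y_def using l1 l2 by auto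
    then show ?thesis using \<open>l1 \<noteq> []\<close> \<open>l2 \<noteq> []\<close> unfolding X_def Y_def okp_def by auto
  qed
  have "good a b s (l1 @ m # l2) = alt t (X @ enat m # Y)" unfolding good_def e t_def by simp
  also have "\<dots> = (alt t (X @ [enat m]) \<and> alt (t + length X) (enat m # Y) \<and>
      (X \<noteq> [] \<longrightarrow> Y \<noteq> [] \<longrightarrow> okp (t + length X) (last X) (enat m) (hd Y)))"
    by (rule alt_append)
  also have "\<dots> = (good a True s l1 \<and> good True b (Suc (s + length l1)) l2 \<and>
     (l1 \<noteq> [] \<longrightarrow> l2 \<noteq> [] \<longrightarrow> odd (Suc (s + length l1))) \<and>
     (l1 = [] \<longrightarrow> l2 = [] \<longrightarrow> a \<longrightarrow> b \<longrightarrow> odd s))"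
    unfolding C A B[unfolded tl] tl by (rule refl)
  finally show ?thesis .
qed

definition cnd :: "bool \<Rightarrow> bool \<Rightarrow> bool \<Rightarrow> nat \<Rightarrow> nat \<Rightarrow> bool" where
  "cnd a b q j n \<longleftrightarrow> (j \<noteq> 0 \<longrightarrow> j \<noteq> n \<longrightarrow> (q \<noteq> even j)) \<and> (n = 0 \<longrightarrow> a \<longrightarrow> b \<longrightarrow> q)"

fun Tseq :: "bool \<Rightarrow> bool \<Rightarrow> bool \<Rightarrow> nat \<Rightarrow> nat" where
  "Tseq a b q 0 = 1"
| "Tseq a b q (Suc n) = (\<Sum>j\<le>n. if cnd a b q j n then (n choose j) * Tseq a True q j * Tseq True b (q \<noteq> even j) (n - j) else 0)"

lemma sum_Pow_card:
  assumes "finite S"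
  shows "(\<Sum>B\<in>Pow S. g (card B)) = (\<Sum>j\<le>card S. (card S choose j) * (g j :: nat))"
proof -
  have "(\<Sum>B\<in>Pow S. g (card B)) = (\<Sum>j\<le>card S. \<Sum>B\<in>{B\<in>Pow S. card B = j}. g (card B))"
    using assms by (intro sum.group[symmetric]) (auto intro: card_mono)
  also have "\<dots> = (\<Sum>j\<le>card S. \<Sum>B\<in>{B\<in>Pow S. card B = j}. g j)"
    by (intro sum.cong) auto
  also have "\<dots> = (\<Sum>j\<le>card S. (card S choose j) * g j)"
  proof (intro sum.cong refl)
    fix j
    have "{B\<in>Pow S. card B = j} = {B. B \<subseteq> S \<and> card B = j}" by auto
    then show "(\<Sum>B\<in>{B\<in>Pow S. card B = j}. g j) = (card S choose j) * g j"
      using n_subsets[OF assms, of j] by simp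
  qed
  finally show ?thesis .
qed

lemma count_good:
  "finite A \<Longrightarrow> card {p \<in> permutations_of_set A. good a b s p} = Tseq a b (odd s) (card A)"
proof (induction "card A" arbitrary: A a b s rule: less_induct)
  case less
  show ?case
  proof (cases "A = {}")
    case True
    then have "{p \<in> permutations_of_set A. good a b s p} = {[]}" using good_Nil by auto
    then show ?thesis using True by simp
  next
    case False
    define m where "m = Max A"
    define A' where "A' = A - {m}"
    define n' where "n' = card A'"
    have mA: "m \<in> A" unfolding m_def using False less.prems by simp
    have fA': "finite A'" unfolding A'_def using less.prems by simp
    have cA: "card A = Suc n'" unfolding n'_def A'_def using mA less.prems
      by (metis card_Suc_Diff1)
    have lt: "x < m" if "x \<in> A'" for x
      using that less.prems unfolding A'_def m_def
      by (metis DiffD1 DiffD2 Max_ge insertI1 order_le_neq_trans)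
    define W where "W B = {(l1,l2). l1 \<in> permutations_of_set B \<and> l2 \<in> permutations_of_set (A' - B) \<and>
        good a True s l1 \<and> good True b (Suc (s + card B)) l2 \<and> cnd a b (odd s) (card B) n'}" for B
    define f where "f = (\<lambda>(l1::nat list,l2). l1 @ m # l2)"
    have img: "{p \<in> permutations_of_set A. good a b s p} = f ` (\<Union>B\<in>Pow A'. W B)"
    proof (intro equalityI subsetI)
      fix p assume "p \<in> {p \<in> permutations_of_set A. good a b s p}"
      then have p: "set p = A" "distinct p" "good a b s p" by (auto simp: permutations_of_set_def)
      then obtain l1 l2 where pl: "p = l1 @ m # l2" using mA by (metis split_list)
      have d: "distinct l1" "distinct l2" "m \<notin> set l1" "m \<notin> set l2" "set l1 \<inter> set l2 = {}"
        using p(2) pl by auto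
      have s1: "set l1 \<subseteq> A'" and s2: "set l2 = A' - set l1"
        using p(1) pl d unfolding A'_def by auto
      have "\<forall>x\<in>set l1. x < m" "\<forall>x\<in>set l2. x < m" using s1 s2 lt by auto
      note gs = good_split[OF this, of a b s]
      have cl: "card (set l1) = length l1" using d by (simp add: distinct_card)
      have cl2: "length l1 + length l2 = n'"
      proof -
        have "length p = card A" using p by (metis distinct_card)
        then show ?thesis using cA pl by simp
      qed
      have cndok: "cnd a b (odd s) (length l1) n'"
      proof -
        have "l2 = [] \<longleftrightarrow> length l1 = n'" "n' = 0 \<longrightarrow> l1 = [] \<and> l2 = []" using cl2 by auto
        then show ?thesis using p(3) unfolding pl gs cnd_def by auto
      qed
      have "(l1, l2) \<in> W (set l1)"
        unfolding W_def using d s2 p(3) cndok unfolding pl gs cl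
        by (auto simp: permutations_of_set_def)
      then show "p \<in> f ` (\<Union>B\<in>Pow A'. W B)" using s1 unfolding f_def pl by force
    next
      fix p assume "p \<in> f ` (\<Union>B\<in>Pow A'. W B)"
      then obtain B l1 l2 where B: "B \<subseteq> A'" and w: "(l1,l2) \<in> W B" and pl: "p = l1 @ m # l2"
        unfolding f_def by auto
      have l: "set l1 = B" "distinct l1" "set l2 = A' - B" "distinct l2"
        "good a True s l1" "good True b (Suc (s + card B)) l2" "cnd a b (odd s) (card B) n'"
        using w unfolding W_def by (auto simp: permutations_of_set_def)
      have cl: "card B = length l1" using l by (metis distinct_card)
      have "\<forall>x\<in>set l1. x < m" "\<forall>x\<in>set l2. x < m" using l B lt by auto
      note gs = good_split[OF this, of a b s]
      have len: "length l1 + length l2 = n'"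
      proof -
        have "card (A' - B) = n' - card B" unfolding n'_def using B fA'
          by (simp add: card_Diff_subset finite_subset)
        moreover have "card B \<le> n'" unfolding n'_def using B fA' by (simp add: card_mono)
        ultimately show ?thesis using l cl by (metis distinct_card le_add_diff_inverse)
      qed
      have "set p = A" using l B mA unfolding pl A'_def by auto
      moreover have "distinct p" using l B unfolding pl A'_def by auto
      moreover have "good a b s p" unfolding pl gs using l cl len unfolding cnd_def
        by auto
      ultimately show "p \<in> {p \<in> permutations_of_set A. good a b s p}"
        by (auto simp: permutations_of_set_def)
    qed
    have inj: "inj_on f (\<Union>B\<in>Pow A'. W B)"
    proof (rule inj_onI)
      fix x y assume x: "x \<in> (\<Union>B\<in>Pow A'. W B)" and y: "y \<in> (\<Union>B\<in>Pow A'. W B)" and e: "f x = f y"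
      obtain x1 x2 y1 y2 where xy: "x = (x1,x2)" "y = (y1,y2)" by fastforce
      have "m \<notin> set x1" "m \<notin> set x2" "m \<notin> set y1" "m \<notin> set y2"
        using x y unfolding xy W_def A'_def by (auto simp: permutations_of_set_def)
      then show "x = y" using e unfolding xy f_def by (simp add: append_Cons_eq_iff)
    qed
    have finW: "finite (W B)" for B
    proof -
      have "W B \<subseteq> permutations_of_set B \<times> permutations_of_set (A' - B)" unfolding W_def by auto
      then show ?thesis by (rule finite_subset) simp
    qed
    have cardU: "card (\<Union>B\<in>Pow A'. W B) = (\<Sum>B\<in>Pow A'. card (W B))"
    proof (rule card_UN_disjoint)
      show "finite (Pow A')" using fA' by simp
      show "\<forall>i\<in>Pow A'. finite (W i)" using finW by simp
      show "\<forall>i\<in>Pow A'. \<forall>j\<in>Pow A'. i \<noteq> j \<longrightarrow> W i \<inter> W j = {}"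
        unfolding W_def by (auto simp: permutations_of_set_def)
    qed
    have cardW: "card (W B) = (if cnd a b (odd s) (card B) n' then
        Tseq a True (odd s) (card B) * Tseq True b (odd s \<noteq> even (card B)) (n' - card B) else 0)"
      if B: "B \<in> Pow A'" for B
    proof (cases "cnd a b (odd s) (card B) n'")
      case False
      then show ?thesis unfolding W_def by simp
    next
      case True
      have fB: "finite B" using B fA' by (auto intro: finite_subset)
      have cB: "card B < card A" using B fA' cA unfolding n'_def
        by (simp add: card_mono le_imp_less_Suc)
      have cB2: "card (A' - B) = n' - card B" unfolding n'_def using B fA'
        by (simp add: card_Diff_subset finite_subset)
      have cB3: "card (A' - B) < card A" using cB2 cA by simp
      have "W B = {l1 \<in> permutations_of_set B. good a True s l1} \<times>
                  {l2 \<in> permutations_of_set (A' - B). good True b (Suc (s + card B)) l2}"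
        unfolding W_def using True by auto
      then have "card (W B) = card {l1 \<in> permutations_of_set B. good a True s l1} *
                  card {l2 \<in> permutations_of_set (A' - B). good True b (Suc (s + card B)) l2}"
        by (simp add: card_cartesian_product)
      also have "\<dots> = Tseq a True (odd s) (card B) * Tseq True b (odd (Suc (s + card B))) (n' - card B)"
        using less.hyps[OF cB fB] less.hyps[OF cB3, of True b "Suc (s + card B)"] fA' cB2 by simp
      also have "odd (Suc (s + card B)) = (odd s \<noteq> even (card B))" by auto
      finally show ?thesis using True by simp
    qed
    have "card {p \<in> permutations_of_set A. good a b s p} = (\<Sum>B\<in>Pow A'. card (W B))"
      unfolding img card_image[OF inj] cardU ..
    also have "\<dots> = (\<Sum>B\<in>Pow A'. (\<lambda>j. if cnd a b (odd s) j n' then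
        Tseq a True (odd s) j * Tseq True b (odd s \<noteq> even j) (n' - j) else 0) (card B))"
      by (intro sum.cong refl) (simp add: cardW)
    also have "\<dots> = (\<Sum>j\<le>n'. (n' choose j) * (if cnd a b (odd s) j n' then
        Tseq a True (odd s) j * Tseq True b (odd s \<noteq> even j) (n' - j) else 0))"
      unfolding n'_def by (rule sum_Pow_card[OF fA'])
    also have "\<dots> = Tseq a b (odd s) (card A)"
      unfolding cA by (simp add: mult.assoc cong: if_cong) (intro sum.cong refl, simp)
    finally show ?thesis .
  qed
qed

lemma alt_nth:
  "alt t xs \<longleftrightarrow> (\<forall>i. 0 < i \<longrightarrow> Suc i < length xs \<longrightarrow> okp (t + i) (xs!(i-1)) (xs!i) (xs!Suc i))"
proof (induction t xs rule: alt.induct)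
  case (1 t x y z zs)
  have "(\<forall>i. 0 < i \<longrightarrow> Suc i < length (x#y#z#zs) \<longrightarrow>
           okp (t + i) ((x#y#z#zs)!(i-1)) ((x#y#z#zs)!i) ((x#y#z#zs)!Suc i)) \<longleftrightarrow>
        okp (Suc t) x y z \<and> (\<forall>i. 0 < i \<longrightarrow> Suc i < length (y#z#zs) \<longrightarrow>
           okp (Suc t + i) ((y#z#zs)!(i-1)) ((y#z#zs)!i) ((y#z#zs)!Suc i))" (is "?L \<longleftrightarrow> ?R")
  proof
    assume L: ?L
    have "okp (Suc t) x y z" using L[rule_format, of 1] by simp
    moreover have "okp (Suc t + i) ((y#z#zs)!(i-1)) ((y#z#zs)!i) ((y#z#zs)!Suc i)"
      if "0 < i" "Suc i < length (y#z#zs)" for i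
      using L[rule_format, of "Suc i"] that by (cases i) auto
    ultimately show ?R by blast
  next
    assume R: ?R
    show ?L
    proof (intro allI impI)
      fix i assume i: "0 < i" "Suc i < length (x#y#z#zs)"
      show "okp (t + i) ((x#y#z#zs)!(i-1)) ((x#y#z#zs)!i) ((x#y#z#zs)!Suc i)"
      proof (cases "i = 1")
        case True then show ?thesis using R by simp
      next
        case False
        then obtain k where k: "i = Suc k" "0 < k" using i by (cases i) auto
        then show ?thesis using R[THEN conjunct2, rule_format, of k] i by (cases k) auto
      qed
    qed
  qed
  then show ?case using 1 by simp
next
  case ("2_1" t)
  then show ?case by simp
next
  case ("2_2" t x)
  then show ?case by simp
next
  case ("2_3" t x y)
  then show ?case by simp
qed

lemma good_top:
  "good False False 0 p \<longleftrightarrow> (\<forall>i. is_valley p i \<longrightarrow> even i) \<and> (\<forall>i. is_peak p i \<longrightarrow> odd i)"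
proof -
  have "good False False 0 p \<longleftrightarrow>
     (\<forall>i. 0 < i \<longrightarrow> Suc i < length p \<longrightarrow> okp (Suc i) (enat (p!(i-1))) (enat (p!i)) (enat (p!Suc i)))"
    unfolding good_def ext_def alt_nth by simp
  also have "\<dots> \<longleftrightarrow> (\<forall>i. 0 < i \<longrightarrow> Suc i < length p \<longrightarrow>
      ((p!i < p!(i-1) \<and> p!i < p!Suc i) \<longrightarrow> even (Suc i)) \<and>
      ((p!(i-1) < p!i \<and> p!Suc i < p!i) \<longrightarrow> odd (Suc i)))"
    unfolding okp_def by simp
  also have "\<dots> \<longleftrightarrow> (\<forall>i. is_valley p i \<longrightarrow> even i) \<and> (\<forall>i. is_peak p i \<longrightarrow> odd i)"
  proof (intro iffI conjI allI impI)
    fix i assume A: "\<forall>i. 0 < i \<longrightarrow> Suc i < length p \<longrightarrow>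
      ((p!i < p!(i-1) \<and> p!i < p!Suc i) \<longrightarrow> even (Suc i)) \<and>
      ((p!(i-1) < p!i \<and> p!Suc i < p!i) \<longrightarrow> odd (Suc i))"
    {
      assume v: "is_valley p i"
      then obtain k where k: "i = Suc k" "0 < k" unfolding is_valley_def by (cases i) auto
      have "Suc k < length p" using v k unfolding is_valley_def by auto
      then show "even i" using A[rule_format, of k] v k unfolding is_valley_def
        by (auto simp: numeral_2_eq_2)
    }
    {
      assume v: "is_peak p i"
      then obtain k where k: "i = Suc k" "0 < k" unfolding is_peak_def by (cases i) auto
      have "Suc k < length p" using v k unfolding is_peak_def by auto
      then show "odd i" using A[rule_format, of k] v k unfolding is_peak_def
        by (auto simp: numeral_2_eq_2)
    }
  next
    fix i assume VP: "(\<forall>i. is_valley p i \<longrightarrow> even i) \<and> (\<forall>i. is_peak p i \<longrightarrow> odd i)"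
      and i: "0 < i" "Suc i < length p"
    {
      assume "p!i < p!(i-1) \<and> p!i < p!Suc i"
      then have "is_valley p (Suc i)" using i unfolding is_valley_def by (auto simp: numeral_2_eq_2)
      then show "even (Suc i)" using VP by blast
    }
    {
      assume "p!(i-1) < p!i \<and> p!Suc i < p!i"
      then have "is_peak p (Suc i)" using i unfolding is_peak_def by (auto simp: numeral_2_eq_2)
      then show "odd (Suc i)" using VP by blast
    }
  qed
  finally show ?thesis .
qed

lemma f_count_Tseq: "f_count n = Tseq False False False n"
proof -
  have "f_count n = card {p \<in> permutations_of_set {1..n}. good False False 0 p}"
    unfolding f_count_def good_top ..
  also have "\<dots> = Tseq False False False n" using count_good[of "{1..n}" False False 0] by simp
  finally show ?thesis .
qed


definition "cc = fps_cos (1/2::real)"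
definition "ss = fps_sin (1/2::real)"
definition "hh = fps_cosh (sqrt 3 / 2)"
definition "tt = fps_const (1 / sqrt 3) * fps_sinh (sqrt 3 / 2)"
definition "QQ = cc^2 - tt^2"
definition "iQ = inverse QQ"

lemma fps_cosh_deriv: "fps_deriv (fps_cosh a) = fps_const a * fps_sinh a"
  unfolding fps_cosh_def fps_sinh_def by (simp add: algebra_simps flip: fps_const_neg)

lemma fps_sinh_deriv: "fps_deriv (fps_sinh a) = fps_const a * fps_cosh a"
  unfolding fps_cosh_def fps_sinh_def by (simp add: algebra_simps flip: fps_const_neg)

lemma cosh_sinh_sq: "fps_cosh a ^ 2 - fps_sinh a ^ 2 = 1"
proof -
  have e: "fps_exp a * fps_exp (-a) = 1" by (simp flip: fps_exp_add_mult)
  have "fps_cosh a ^ 2 - fps_sinh a ^ 2 = fps_const (1/2) * fps_const (1/2) * (4 * (fps_exp a * fps_exp (-a)))"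
    unfolding fps_cosh_def fps_sinh_def by (simp add: algebra_simps power2_eq_square)
  also have "\<dots> = 1" unfolding e by (simp add: numeral_fps_const)
  finally show ?thesis .
qed

lemma d_cc: "2 * fps_deriv cc = - ss"
  unfolding cc_def ss_def fps_cos_deriv by (simp add: numeral_fps_const flip: mult.assoc fps_const_neg)
lemma d_ss: "2 * fps_deriv ss = cc"
  unfolding cc_def ss_def fps_sin_deriv by (simp add: numeral_fps_const)
lemma d_hh: "2 * fps_deriv hh = 3 * tt"
proof -
  have "2 * fps_deriv hh = fps_const (sqrt 3) * fps_sinh (sqrt 3 / 2)"
    unfolding hh_def fps_cosh_deriv by (simp add: numeral_fps_const)
  also have "\<dots> = 3 * tt" unfolding tt_def by (simp add: numeral_fps_const real_div_sqrt flip: mult.assoc)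
  finally show ?thesis .
qed
lemma d_tt: "2 * fps_deriv tt = hh"
  by (simp add: tt_def hh_def fps_sinh_deriv numeral_fps_const flip: mult.assoc)

lemma pyth1: "cc^2 + ss^2 = 1"
  unfolding cc_def ss_def by (rule fps_sin_cos_sum_of_squares)

lemma pyth2: "hh^2 - 3 * tt^2 = 1"
proof -
  have "3 * tt^2 = fps_sinh (sqrt 3 / 2) ^ 2"
    unfolding tt_def by (simp add: power_mult_distrib numeral_fps_const power_divide)
  then show ?thesis unfolding hh_def using cosh_sinh_sq by simp
qed

lemma nth0: "fps_nth cc 0 = 1" "fps_nth ss 0 = 0" "fps_nth hh 0 = 1" "fps_nth tt 0 = 0"
  by (simp_all add: cc_def ss_def hh_def tt_def fps_cosh_def fps_sinh_def)

lemma QQ0: "fps_nth QQ 0 = 1"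
  unfolding QQ_def by (simp add: power2_eq_square nth0)

lemma iQQ: "iQ * QQ = 1"
  unfolding iQ_def using QQ0 by (simp add: inverse_mult_eq_1)

lemma d_iQ: "fps_deriv iQ = - fps_deriv QQ * iQ^2"
  unfolding iQ_def using QQ0 by (simp add: fps_inverse_deriv)

definition rfl :: "real fps \<Rightarrow> real fps" where
  "rfl X = Abs_fps (\<lambda>n. (-1)^n * fps_nth X n)"

lemma rfl_add[simp]: "rfl (X + Y) = rfl X + rfl Y"
  unfolding rfl_def by (rule fps_ext) (simp add: algebra_simps)
lemma rfl_diff[simp]: "rfl (X - Y) = rfl X - rfl Y"
  unfolding rfl_def by (rule fps_ext) (simp add: algebra_simps)
lemma rfl_uminus[simp]: "rfl (- X) = - rfl X"
  unfolding rfl_def by (rule fps_ext) simp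
lemma rfl_const[simp]: "rfl (fps_const k) = fps_const k"
  unfolding rfl_def by (rule fps_ext) (simp add: fps_const_def)
lemma rfl_1[simp]: "rfl 1 = 1"
  using rfl_const[of 1] by simp
lemma rfl_numeral[simp]: "rfl (numeral k) = numeral k"
  by (simp add: numeral_fps_const)
lemma rfl_mult[simp]: "rfl (X * Y) = rfl X * rfl Y"
proof (rule fps_ext)
  fix n
  have "fps_nth (rfl (X * Y)) n = (-1)^n * (\<Sum>i=0..n. fps_nth X i * fps_nth Y (n - i))"
    unfolding rfl_def by (simp add: fps_mult_nth)
  also have "\<dots> = (\<Sum>i=0..n. (-1)^n * (fps_nth X i * fps_nth Y (n - i)))"
    by (rule sum_distrib_left)
  also have "\<dots> = (\<Sum>i=0..n. ((-1)^i * fps_nth X i) * ((-1)^(n-i) * fps_nth Y (n - i)))"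
  proof (intro sum.cong refl)
    fix i assume "i \<in> {0..n}"
    then have "n = i + (n - i)" by simp
    then have "(-1::real)^n = (-1)^i * (-1)^(n-i)" by (metis power_add)
    then show "(-1)^n * (fps_nth X i * fps_nth Y (n - i)) = ((-1)^i * fps_nth X i) * ((-1)^(n-i) * fps_nth Y (n - i))"
      by (simp only: mult_ac)
  qed
  also have "\<dots> = fps_nth (rfl X * rfl Y) n" unfolding rfl_def fps_mult_nth by simp
  finally show "fps_nth (rfl (X * Y)) n = fps_nth (rfl X * rfl Y) n" .
qed
lemma rfl_power[simp]: "rfl (X ^ k) = rfl X ^ k"
  by (induction k) simp_all

lemma rfl_inverse:
  assumes "fps_nth X 0 \<noteq> 0"
  shows "rfl (inverse X) = inverse (rfl X)"
proof -
  have "X * inverse X = 1" using assms by (simp add: inverse_mult_eq_1')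
  then have "rfl (X * inverse X) = 1" by simp
  then have "rfl X * rfl (inverse X) = 1" by (simp only: rfl_mult)
  then show ?thesis by (simp add: fps_inverse_unique)
qed

lemma rfl_cc[simp]: "rfl cc = cc"
  unfolding rfl_def cc_def fps_cos_def by (rule fps_ext) auto
lemma rfl_ss[simp]: "rfl ss = - ss"
  unfolding rfl_def ss_def fps_sin_def by (rule fps_ext) auto
lemma rfl_exp: "rfl (fps_exp a) = fps_exp (- a)"
proof (rule fps_ext)
  fix n
  have "(-a)^n = (-1)^n * a^n" by (rule power_minus)
  then show "fps_nth (rfl (fps_exp a)) n = fps_nth (fps_exp (- a)) n"
    unfolding rfl_def by simp
qed
lemma rfl_hh[simp]: "rfl hh = hh"
  unfolding hh_def fps_cosh_def by (simp add: rfl_exp algebra_simps)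
lemma rfl_tt[simp]: "rfl tt = - tt"
  unfolding tt_def fps_sinh_def by (simp add: rfl_exp algebra_simps)
lemma rfl_QQ[simp]: "rfl QQ = QQ"
  unfolding QQ_def by simp
lemma rfl_iQ[simp]: "rfl iQ = iQ"
  unfolding iQ_def using QQ0 by (simp add: rfl_inverse)

definition fE :: "real fps \<Rightarrow> real fps" where
  "fE X = Abs_fps (\<lambda>n. if even n then fps_nth X n else 0)"
definition fO :: "real fps \<Rightarrow> real fps" where
  "fO X = Abs_fps (\<lambda>n. if even n then 0 else fps_nth X n)"

lemma fE_refl: "fE X = fps_const (1/2) * (X + rfl X)"
  unfolding fE_def rfl_def by (rule fps_ext) auto
lemma fO_refl: "fO X = fps_const (1/2) * (X - rfl X)"
  unfolding fO_def rfl_def by (rule fps_ext) auto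

lemma half_twice: "fps_const (1/2) * (X + X) = (X :: real fps)"
proof -
  have "fps_const (1/2) * (X + X) = fps_const (1/2) * fps_const 2 * X"
    by (simp add: algebra_simps numeral_fps_const flip: mult_2)
  also have "\<dots> = X" by simp
  finally show ?thesis .
qed

lemma fE_eo: "rfl e = e \<Longrightarrow> rfl o' = - o' \<Longrightarrow> fE ((e + o') * iQ) = e * iQ"
  unfolding fE_refl using half_twice[of "e * iQ"] by (simp add: algebra_simps)
lemma fO_eo: "rfl e = e \<Longrightarrow> rfl o' = - o' \<Longrightarrow> fO ((e + o') * iQ) = o' * iQ"
  unfolding fO_refl using half_twice[of "o' * iQ"] by (simp add: algebra_simps)

definition "nF = (ss + hh) * (cc + tt)"
definition "nC = (cc + tt) * (cc + tt)"
definition "e0 = cc * hh + ss * tt"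
definition "o0 = 2 * cc * tt"
definition "e1 = cc * cc + tt * tt"
definition "o1 = ss * cc + hh * tt"
definition "o2 = hh * tt - cc * ss"

lemma dQQ: "fps_deriv QQ = 2 * cc * fps_deriv cc - 2 * tt * fps_deriv tt"
  unfolding QQ_def by (simp add: fps_deriv_power algebra_simps numeral_fps_const)

lemma deriv_n_iQ: "fps_deriv (n * iQ) = fps_deriv n * iQ - n * (2 * cc * fps_deriv cc - 2 * tt * fps_deriv tt) * iQ^2"
  by (simp add: d_iQ dQQ algebra_simps)

lemmas alg_facts = d_cc d_ss d_hh d_tt pyth1 pyth2 iQQ[unfolded QQ_def]

lemma id1: "fps_deriv (nF * iQ) = e0 * iQ * (nF * iQ) + o0 * iQ"
  unfolding deriv_n_iQ using alg_facts unfolding nF_def e0_def o0_def by (simp add: algebra_simps) algebra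

lemma id2: "fps_deriv (nF * iQ) = o1 * iQ * (nF * iQ) + nC * iQ + e1 * iQ - 1"
  unfolding deriv_n_iQ using alg_facts unfolding nF_def nC_def e1_def o1_def by (simp add: algebra_simps) algebra

lemma id3: "fps_deriv ((e0 + o0) * iQ) = e0 * iQ * ((e1 + o1) * iQ) + o0 * iQ"
  unfolding deriv_n_iQ using alg_facts unfolding e0_def o0_def e1_def o1_def by (simp add: algebra_simps) algebra

lemma id4: "fps_deriv ((e1 + o1) * iQ) = o1 * iQ * ((e1 + o1) * iQ) + (e1 + o2) * iQ + e1 * iQ - 1"
  unfolding deriv_n_iQ using alg_facts unfolding e1_def o1_def o2_def by (simp add: algebra_simps) algebra

lemma id5: "fps_deriv (nC * iQ) = e1 * iQ * (nF * iQ) + o2 * iQ"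
  unfolding deriv_n_iQ using alg_facts unfolding nF_def nC_def e1_def o2_def by (simp add: algebra_simps) algebra

lemma id7: "fps_deriv ((e1 + o2) * iQ) = e1 * iQ * ((e1 + o1) * iQ) + o2 * iQ - 1"
  unfolding deriv_n_iQ using alg_facts unfolding e1_def o1_def o2_def by (simp add: algebra_simps) algebra

lemma EO:
  "fE ((e0 + o0) * iQ) = e0 * iQ" "fO ((e0 + o0) * iQ) = o0 * iQ"
  "fE ((e1 + o1) * iQ) = e1 * iQ" "fO ((e1 + o1) * iQ) = o1 * iQ"
  "fE ((e1 + o2) * iQ) = e1 * iQ" "fO ((e1 + o2) * iQ) = o2 * iQ"
  by (rule fE_eo fO_eo; simp add: e0_def o0_def e1_def o1_def o2_def algebra_simps)+

definition cand :: "bool \<Rightarrow> bool \<Rightarrow> bool \<Rightarrow> real fps" where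
  "cand a b q = (if a then (if b then (if q then (e1 + o1) * iQ else (e1 + o2) * iQ)
                            else (if q then nF * iQ else nC * iQ))
                 else (if b then (if q then (e1 + o1) * iQ else (e0 + o0) * iQ) else nF * iQ))"

lemma dF: "fps_deriv (cand a b False) =
   fE (cand a True False) * cand True b True + fO (cand a True False) - (if a \<and> b then 1 else 0)"
  by (cases a; cases b) (simp_all add: cand_def EO id1 id3 id5 id7 del: fps_deriv_mult)

lemma dT: "fps_deriv (cand a b True) =
   fO (cand a True True) * cand True b True + cand True b False + fE (cand a True True) - 1"
  by (cases a; cases b) (simp_all add: cand_def EO id2 id4 del: fps_deriv_mult)

lemma iQ0: "fps_nth iQ 0 = 1"
  unfolding iQ_def using QQ0 by simp

lemma cand0: "fps_nth (cand a b q) 0 = 1"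
  by (simp add: cand_def iQ0 nF_def nC_def e0_def o0_def e1_def o1_def o2_def nth0)

lemma sum_atMost_last: "(\<Sum>j\<le>(n::nat). f j) = (\<Sum>j<n. f j) + (f n :: real)"
proof -
  have "{..n} = insert n {..<n}" by auto
  then show ?thesis by (simp add: add.commute)
qed

lemma genF:
  assumes B0: "fps_nth (Bf False) 0 = 1"
  shows "fps_nth (fE A * Bf True + fO A) n =
    (\<Sum>j\<le>n. if (j \<noteq> 0 \<longrightarrow> j \<noteq> n \<longrightarrow> even j) then fps_nth A j * fps_nth (Bf (even j)) (n - j) else 0)"
proof -
  have "fps_nth (fE A * Bf True) n = (\<Sum>j\<le>n. (if even j then fps_nth A j else 0) * fps_nth (Bf True) (n - j))"
    by (simp add: fps_mult_nth fE_def atLeast0AtMost)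
  also have "\<dots> = (\<Sum>j<n. (if even j then fps_nth A j else 0) * fps_nth (Bf True) (n - j)) +
      (if even n then fps_nth A n * fps_nth (Bf True) 0 else 0)"
    by (simp add: sum_atMost_last)
  finally have L: "fps_nth (fE A * Bf True + fO A) n = (\<Sum>j<n. (if even j then fps_nth A j else 0) * fps_nth (Bf True) (n - j)) +
      (if even n then fps_nth A n * fps_nth (Bf True) 0 else 0) + (if even n then 0 else fps_nth A n)"
    by (simp add: fO_def)
  have R: "(\<Sum>j\<le>n. if (j \<noteq> 0 \<longrightarrow> j \<noteq> n \<longrightarrow> even j) then fps_nth A j * fps_nth (Bf (even j)) (n - j) else 0) =
     (\<Sum>j<n. (if even j then fps_nth A j else 0) * fps_nth (Bf True) (n - j)) + fps_nth A n * fps_nth (Bf (even n)) 0"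
    unfolding sum_atMost_last by (intro arg_cong2[where f="(+)"] sum.cong) auto
  show ?thesis unfolding L R using B0 by auto
qed

lemma genT:
  assumes B0: "fps_nth (Bf False) 0 = 1" and A0: "fps_nth A 0 = 1"
  shows "fps_nth (fO A * Bf True + Bf False + fE A - 1) n =
    (\<Sum>j\<le>n. if (j \<noteq> 0 \<longrightarrow> j \<noteq> n \<longrightarrow> odd j) then fps_nth A j * fps_nth (Bf (odd j)) (n - j) else 0)"
proof (cases "n = 0")
  case True
  then show ?thesis using A0 B0 by (simp add: fE_def fO_def)
next
  case False
  have "fps_nth (fO A * Bf True) n = (\<Sum>j\<le>n. (if even j then 0 else fps_nth A j) * fps_nth (Bf True) (n - j))"
    by (simp add: fps_mult_nth fO_def atLeast0AtMost)
  also have "\<dots> = (\<Sum>j<n. (if even j then 0 else fps_nth A j) * fps_nth (Bf True) (n - j)) +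
      (if even n then 0 else fps_nth A n * fps_nth (Bf True) 0)"
    by (simp add: sum_atMost_last)
  finally have L: "fps_nth (fO A * Bf True + Bf False + fE A - 1) n =
      (\<Sum>j<n. (if even j then 0 else fps_nth A j) * fps_nth (Bf True) (n - j)) +
      (if even n then 0 else fps_nth A n * fps_nth (Bf True) 0) + fps_nth (Bf False) n +
      (if even n then fps_nth A n else 0)"
    using False by (simp add: fE_def)
  have "(\<Sum>j<n. if (j \<noteq> 0 \<longrightarrow> j \<noteq> n \<longrightarrow> odd j) then fps_nth A j * fps_nth (Bf (odd j)) (n - j) else 0) =
      (\<Sum>j<n. (if even j then 0 else fps_nth A j) * fps_nth (Bf True) (n - j) + (if j = 0 then fps_nth (Bf False) n else 0))"
    using A0 by (intro sum.cong) auto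
  also have "\<dots> = (\<Sum>j<n. (if even j then 0 else fps_nth A j) * fps_nth (Bf True) (n - j)) + fps_nth (Bf False) n"
    using False by (simp add: sum.distrib)
  finally have R: "(\<Sum>j\<le>n. if (j \<noteq> 0 \<longrightarrow> j \<noteq> n \<longrightarrow> odd j) then fps_nth A j * fps_nth (Bf (odd j)) (n - j) else 0) =
      (\<Sum>j<n. (if even j then 0 else fps_nth A j) * fps_nth (Bf True) (n - j)) + fps_nth (Bf False) n +
      fps_nth A n * fps_nth (Bf (odd n)) 0"
    unfolding sum_atMost_last by simp
  show ?thesis unfolding L R using B0 by auto
qed


lemma keyT: "fps_nth (fps_deriv (cand a b True)) n =
  (\<Sum>j\<le>n. if cnd a b True j n then fps_nth (cand a True True) j * fps_nth (cand True b (odd j)) (n - j) else 0)"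
proof -
  have "fps_nth (fps_deriv (cand a b True)) n = (\<Sum>j\<le>n. if (j \<noteq> 0 \<longrightarrow> j \<noteq> n \<longrightarrow> odd j)
      then fps_nth (cand a True True) j * fps_nth (cand True b (odd j)) (n - j) else 0)"
    unfolding dT by (rule genT[where Bf = "cand True b"]) (simp_all add: cand0)
  then show ?thesis by (simp add: cnd_def)
qed

lemma keyF: "fps_nth (fps_deriv (cand a b False)) n =
  (\<Sum>j\<le>n. if cnd a b False j n then fps_nth (cand a True False) j * fps_nth (cand True b (even j)) (n - j) else 0)"
proof -
  have G: "fps_nth (fE (cand a True False) * cand True b True + fO (cand a True False)) n =
    (\<Sum>j\<le>n. if (j \<noteq> 0 \<longrightarrow> j \<noteq> n \<longrightarrow> even j)
      then fps_nth (cand a True False) j * fps_nth (cand True b (even j)) (n - j) else 0)"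
    by (rule genF[where Bf = "cand True b"]) (simp add: cand0)
  show ?thesis
  proof (cases "a \<and> b \<and> n = 0")
    case True
    then show ?thesis using G unfolding dF by (simp add: cnd_def cand0)
  next
    case nt: False
    have "fps_nth (fps_deriv (cand a b False)) n =
      fps_nth (fE (cand a True False) * cand True b True + fO (cand a True False)) n"
      unfolding dF using nt by (auto simp: fps_one_nth)
    moreover have cndeq: "cnd a b False j n = (j \<noteq> 0 \<longrightarrow> j \<noteq> n \<longrightarrow> even j)" for j
      using nt unfolding cnd_def by auto
    ultimately show ?thesis unfolding G cndeq by simp
  qed
qed

lemma key: "fps_nth (fps_deriv (cand a b q)) n =
  (\<Sum>j\<le>n. if cnd a b q j n then fps_nth (cand a True q) j * fps_nth (cand True b (q \<noteq> even j)) (n - j) else 0)"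
proof -
  have e: "(True \<noteq> even j) = odd j" "(False \<noteq> even j) = even j" for j :: nat by auto
  show ?thesis by (cases q) (simp only: keyT e, simp only: keyF e)
qed

lemma Tseq_rec_real:
  "real (Tseq a b q (Suc n)) / fact (Suc n) * real (Suc n) =
   (\<Sum>j\<le>n. if cnd a b q j n then (real (Tseq a True q j) / fact j) *
        (real (Tseq True b (q \<noteq> even j) (n - j)) / fact (n - j)) else 0)"
proof -
  have "real (Tseq a b q (Suc n)) / fact (Suc n) * real (Suc n) = real (Tseq a b q (Suc n)) / fact n"
    by (simp add: fact_Suc)
  also have "\<dots> = (\<Sum>j\<le>n. (if cnd a b q j n then real (n choose j) * real (Tseq a True q j) *
        real (Tseq True b (q \<noteq> even j) (n - j)) else 0) / fact n)"
    by (simp add: sum_divide_distrib of_nat_sum if_distrib cong: if_cong)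
  also have "\<dots> = (\<Sum>j\<le>n. if cnd a b q j n then (real (Tseq a True q j) / fact j) *
        (real (Tseq True b (q \<noteq> even j) (n - j)) / fact (n - j)) else 0)"
  proof (intro sum.cong refl)
    fix j assume "j \<in> {..n}"
    then have "real (n choose j) = fact n / (fact j * fact (n - j))" by (simp add: binomial_fact)
    then show "(if cnd a b q j n then real (n choose j) * real (Tseq a True q j) *
        real (Tseq True b (q \<noteq> even j) (n - j)) else 0) / fact n =
      (if cnd a b q j n then (real (Tseq a True q j) / fact j) *
        (real (Tseq True b (q \<noteq> even j) (n - j)) / fact (n - j)) else 0)"
      by simp
  qed
  finally show ?thesis .
qed

lemma main_eq: "real (Tseq a b q n) / fact n = fps_nth (cand a b q) n"
proof (induction n arbitrary: a b q rule: less_induct)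
  case (less n)
  show ?case
  proof (cases n)
    case 0
    then show ?thesis by (simp add: cand0)
  next
    case (Suc m)
    have "fps_nth (cand a b q) (Suc m) * real (Suc m) = fps_nth (fps_deriv (cand a b q)) m"
      by (simp only: fps_deriv_nth Suc_eq_plus1 mult.commute)
    also have "\<dots> = (\<Sum>j\<le>m. if cnd a b q j m then fps_nth (cand a True q) j *
        fps_nth (cand True b (q \<noteq> even j)) (m - j) else 0)" by (rule key)
    also have "\<dots> = (\<Sum>j\<le>m. if cnd a b q j m then (real (Tseq a True q j) / fact j) *
        (real (Tseq True b (q \<noteq> even j) (m - j)) / fact (m - j)) else 0)"
    proof (intro sum.cong refl)
      fix j assume "j \<in> {..m}"
      then have jn: "j < n" and mjn: "m - j < n" using Suc by auto
      then show "(if cnd a b q j m then fps_nth (cand a True q) j *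
        fps_nth (cand True b (q \<noteq> even j)) (m - j) else 0) =
        (if cnd a b q j m then (real (Tseq a True q j) / fact j) *
        (real (Tseq True b (q \<noteq> even j) (m - j)) / fact (m - j)) else 0)"
        using less.IH[OF jn, of a True q] less.IH[OF mjn, of True b "q \<noteq> even j"] by (simp only:)
    qed
    also have "\<dots> = real (Tseq a b q (Suc m)) / fact (Suc m) * real (Suc m)"
      by (rule Tseq_rec_real[symmetric])
    finally have eq: "fps_nth (cand a b q) (Suc m) * real (Suc m) =
        real (Tseq a b q (Suc m)) / fact (Suc m) * real (Suc m)" .
    have nz: "real (Suc m) \<noteq> 0" by simp
    from eq have "fps_nth (cand a b q) (Suc m) = real (Tseq a b q (Suc m)) / fact (Suc m)"
      by (simp only: mult_right_cancel[OF nz])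
    then show ?thesis using Suc by (simp only:)
  qed
qed

lemma sinh_tt: "fps_const (sqrt 3) * fps_sinh (sqrt 3 / 2) = 3 * tt"
  unfolding tt_def by (simp add: numeral_fps_const real_div_sqrt flip: mult.assoc)

lemma target_eq:
  "(fps_const 3 * fps_sin (1/2) + fps_const 3 * fps_cosh (sqrt 3 / 2)) /
    (fps_const 3 * fps_cos (1/2) - fps_const (sqrt 3) * fps_sinh (sqrt 3 / 2)) = nF * iQ"
proof -
  have num: "fps_const 3 * fps_sin (1/2) + fps_const 3 * fps_cosh (sqrt 3 / 2) = 3 * ss + 3 * hh"
    by (simp add: ss_def hh_def numeral_fps_const)
  have den: "fps_const 3 * fps_cos (1/2) - fps_const (sqrt 3) * fps_sinh (sqrt 3 / 2) = 3 * cc - 3 * tt"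
    by (simp add: cc_def sinh_tt numeral_fps_const)
  have third: "fps_const (1/3) * 3 = (1 :: real fps)" by (simp add: numeral_fps_const)
  have inv: "inverse (3 * cc - 3 * tt) = fps_const (1/3) * (cc + tt) * iQ"
  proof (rule fps_inverse_unique)
    show "(3 * cc - 3 * tt) * (fps_const (1/3) * (cc + tt) * iQ) = 1"
      using third iQQ unfolding QQ_def by algebra
  qed
  have d0: "fps_nth (3 * cc - 3 * tt) 0 \<noteq> 0" by (simp add: nth0)
  show ?thesis unfolding num den fps_divide_unit[OF d0] inv nF_def
    using third by algebra
qed

theorem theorem1:
  shows "Abs_fps (\<lambda>n. real (f_count n) / fact n) =
    (fps_const 3 * fps_sin (1/2) + fps_const 3 * fps_cosh (sqrt 3 / 2)) /
    (fps_const 3 * fps_cos (1/2) - fps_const (sqrt 3) * fps_sinh (sqrt 3 / 2))"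
proof -
  have "Abs_fps (\<lambda>n. real (f_count n) / fact n) = cand False False False"
    by (rule fps_ext) (simp add: f_count_Tseq main_eq)
  also have "\<dots> = nF * iQ" by (simp add: cand_def)
  finally show ?thesis unfolding target_eq .
qed

end
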